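(* Let $\delta\in(0,1)$ and let $G$ be the three-vertex star (path on three vertices) with vertex set $V=\{S,R,W\}$, where the roles of sender $S$, receiver $R$ and the single witness $W$ are assigned to the three vertices in any of the possible ways, and let $\mathcal H=\{\{i,j\}:\{i,j\}\in E(G)\}$. Then the effective bias of the conference $V$ with witness set $\{W\}$ equals $$b_{\mathrm{eff}}=\frac{b^S_R+b^S_W+b^W_R}{2}=\delta+\delta^2,$$ for every assignment of roles. Consequently $N(\delta+\delta^2)\le N(\delta)$ and $N(\delta+\delta^2)\le N(\delta+\tfrac23\delta^2)$: the presence of the witness weakly reduces the number of equilibrium partitions relative to a two-player bias $\delta$ and relative to the private-conversation bias $\delta+\tfrac23\delta^2$.
   Context: For a finite simple undirected graph $G=(V,E)$ and $\delta\in(0,1)$: $v^G(S):=\sum_{i\in S}\sum_{j\in S,\,j\neq i}\delta^{t_{ij}(G[S])}$ for $S\subseteq V$, where $t_{ij}(G[S])$ is the distance in the induced subgraph ($\infty$ if disconnected, $\delta^\infty:=0$). For a conference structure $\mathcal H$ and $C\subseteq V$, $C/\mathcal H$ is the partition of $C$ into classes connected via chains of pairwise-intersecting members of $\mathcal H$ contained in $C$; $r^{v^G}_{\mathcal H}(C):=\sum_{B\in C/\mathcal H}v^G(B)$; for $X\subseteq V$, $\mathcal H|_X:=\{H\in\mathcal H:H\subseteq X\}$. $\mu_j(X;u)$ denotes the Shapley value of player $j$ in the TU game $u$ on player set $X$. Bargaining-power components: $b^j_i:=\mu_j(V;r^{v^G}_{\mathcal H})-\mu_j(V\setminus\{i\};r^{v^G}_{\mathcal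 H|_{V\setminus\{i\}}})$. Effective bias with sender $S$, receiver $R$, witness set $W$: $b_{\mathrm{eff}}:=\bigl(b^S_R+\sum_{w\in W}(b^S_w+b^w_R)\bigr)/(|W|+1)$. For $b>0$, $N(b)$ denotes the unique integer $N\ge1$ with $\beta(N)\le b<\beta(N-1)$, where $\beta(N)=\frac1{2N(N+1)}$ and $\beta(0)=+\infty$ (the number of intervals of the Pareto-superior Crawford–Sobel partition equilibrium with bias $b$); $N$ is non-increasing in $b$. *)

theory Defs
  imports Complex_Main
begin

text \<open>Simple undirected graphs are given by a set E of two-element vertex sets (edges).
  A walk of length n from i to j in the induced subgraph G[S]:\<close>
definition walk_in :: "'a set set \<Rightarrow> 'a set \<Rightarrow> 'a \<Rightarrow> 'a \<Rightarrow> nat \<Rightarrow> bool" where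
  "walk_in E S i j n \<longleftrightarrow> (\<exists>xs. length xs = Suc n \<and> hd xs = i \<and> last xs = j \<and> set xs \<subseteq> S \<and>
       (\<forall>k<n. {xs ! k, xs ! Suc k} \<in> E))"

text \<open>delta to the power of the distance t_ij(G[S]); 0 if disconnected (delta^infinity = 0).\<close>
definition dpow :: "real \<Rightarrow> 'a set set \<Rightarrow> 'a set \<Rightarrow> 'a \<Rightarrow> 'a \<Rightarrow> real" where
  "dpow \<delta> E S i j = (if \<exists>n. walk_in E S i j n then \<delta> ^ (LEAST n. walk_in E S i j n) else 0)"

definition vG :: "real \<Rightarrow> 'a set set \<Rightarrow> 'a set \<Rightarrow> real" where
  "vG \<delta> E S = (\<Sum>i\<in>S. \<Sum>j\<in>S - {i}. dpow \<delta> E S i j)"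

text \<open>C/H: classes of C connected via chains of pairwise-intersecting members of H contained in C.\<close>
definition conf_rel :: "'a set set \<Rightarrow> 'a set \<Rightarrow> ('a \<times> 'a) set" where
  "conf_rel H C = Id_on C \<union> {(x, y). \<exists>h\<in>H. h \<subseteq> C \<and> x \<in> h \<and> y \<in> h}\<^sup>+"

definition conf_part :: "'a set \<Rightarrow> 'a set set \<Rightarrow> 'a set set" where
  "conf_part C H = C // conf_rel H C"

definition rgame :: "real \<Rightarrow> 'a set set \<Rightarrow> 'a set set \<Rightarrow> 'a set \<Rightarrow> real" where
  "rgame \<delta> E H C = (\<Sum>B\<in>conf_part C H. vG \<delta> E B)"

definition restr :: "'a set set \<Rightarrow> 'a set \<Rightarrow> 'a set set" where
  "restr H X = {h \<in> H. h \<subseteq> X}"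

definition shapley :: "'a \<Rightarrow> 'a set \<Rightarrow> ('a set \<Rightarrow> real) \<Rightarrow> real" where
  "shapley j X u = (\<Sum>T\<in>Pow (X - {j}).
     (fact (card T) * fact (card X - card T - 1) / fact (card X)) * (u (insert j T) - u T))"

definition bpow :: "real \<Rightarrow> 'a set set \<Rightarrow> 'a set set \<Rightarrow> 'a set \<Rightarrow> 'a \<Rightarrow> 'a \<Rightarrow> real" where
  "bpow \<delta> E H V j i = shapley j V (rgame \<delta> E H) - shapley j (V - {i}) (rgame \<delta> E (restr H (V - {i})))"

definition b_eff :: "real \<Rightarrow> 'a set set \<Rightarrow> 'a set set \<Rightarrow> 'a set \<Rightarrow> 'a \<Rightarrow> 'a \<Rightarrow> 'a set \<Rightarrow> real" where
  "b_eff \<delta> E H V S R W = (bpow \<delta> E H V S R + (\<Sum>w\<in>W. bpow \<delta> E H V S w + bpow \<delta> E H V w R))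
      / (real (card W) + 1)"

text \<open>Crawford--Sobel: beta N = 1/(2N(N+1)) for N >= 1, beta 0 = +infinity.\<close>
definition cs_beta :: "nat \<Rightarrow> real" where
  "cs_beta N = 1 / (2 * real N * (real N + 1))"

definition cs_N :: "real \<Rightarrow> nat" where
  "cs_N b = (THE N. N \<ge> 1 \<and> cs_beta N \<le> b \<and> (N = 1 \<or> b < cs_beta (N - 1)))"

end

theory Submission imports Defs begin

lemma vG_single: "vG d E {x} = 0" by (simp add: vG_def)

lemma conf_rel_sub: "conf_rel H C \<subseteq> C \<times> C"
proof -
  have "{(x, y). \<exists>h\<in>H. h \<subseteq> C \<and> x \<in> h \<and> y \<in> h} \<subseteq> C \<times> C" by auto
  then have "{(x, y). \<exists>h\<in>H. h \<subseteq> C \<and> x \<in> h \<and> y \<in> h}\<^sup>+ \<subseteq> C \<times> C"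
    by (rule trancl_subset_Sigma)
  then show ?thesis unfolding conf_rel_def by (auto simp: Id_on_def)
qed

lemma conf_rel_none: "(\<forall>h\<in>H. \<not> h \<subseteq> C) \<Longrightarrow> conf_rel H C = Id_on C"
  unfolding conf_rel_def by auto

lemma rgame_discrete: assumes "conf_rel H C = Id_on C" shows "rgame d E H C = 0"
proof -
  have "\<forall>B\<in>conf_part C H. vG d E B = 0"
  proof
    fix B assume "B \<in> conf_part C H"
    then obtain x where "x \<in> C" "B = Id_on C `` {x}" using assms unfolding conf_part_def quotient_def by auto
    then have "B = {x}" by auto
    then show "vG d E B = 0" by (simp add: vG_single)
  qed
  then show ?thesis unfolding rgame_def by simp
qed

lemma rgame_conn: assumes "C \<noteq> {}" "\<forall>x\<in>C. \<forall>y\<in>C. (x,y) \<in> conf_rel H C"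
  shows "rgame d E H C = vG d E C"
proof -
  have "conf_rel H C = C \<times> C" using assms(2) conf_rel_sub[of H C] by auto
  then have "conf_part C H = {C}" using assms(1) unfolding conf_part_def quotient_def by auto
  then show ?thesis by (simp add: rgame_def)
qed

lemma walk0: "walk_in E S i j 0 \<longleftrightarrow> i = j \<and> i \<in> S"
proof
  assume "walk_in E S i j 0"
  then obtain xs where "length xs = Suc 0" "hd xs = i" "last xs = j" "set xs \<subseteq> S"
    unfolding walk_in_def by blast
  then show "i = j \<and> i \<in> S" by (cases xs) auto
next
  assume "i = j \<and> i \<in> S" then show "walk_in E S i j 0"
    unfolding walk_in_def by (intro exI[of _ "[i]"]) auto
qed

lemma walk1: "walk_in E S i j (Suc 0) \<longleftrightarrow> {i,j} \<in> E \<and> i \<in> S \<and> j \<in> S"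
proof
  assume "walk_in E S i j (Suc 0)"
  then obtain xs where "length xs = Suc (Suc 0)" "hd xs = i" "last xs = j" "set xs \<subseteq> S"
     "\<forall>k<Suc 0. {xs ! k, xs ! Suc k} \<in> E"
    unfolding walk_in_def by blast
  moreover then obtain x y where "xs = [x,y]"
    by (metis length_0_conv length_Suc_conv)
  ultimately show "{i,j} \<in> E \<and> i \<in> S \<and> j \<in> S" by auto
next
  assume "{i,j} \<in> E \<and> i \<in> S \<and> j \<in> S" then show "walk_in E S i j (Suc 0)"
    unfolding walk_in_def by (intro exI[of _ "[i,j]"]) auto
qed

lemma walk2: "{i,k} \<in> E \<Longrightarrow> {k,j} \<in> E \<Longrightarrow> i \<in> S \<Longrightarrow> j \<in> S \<Longrightarrow> k \<in> S \<Longrightarrow> walk_in E S i j 2"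
  unfolding walk_in_def
  apply (intro exI[of _ "[i,k,j]"])
  apply (auto simp: less_Suc_eq numeral_2_eq_2)
  done

lemma dpow1: assumes "{i,j} \<in> E" "i \<in> S" "j \<in> S" "i \<noteq> j" shows "dpow d E S i j = d"
proof -
  have w: "walk_in E S i j 1" using assms walk1[of E S i j] by simp
  have "(LEAST n. walk_in E S i j n) = 1"
  proof (rule Least_equality)
    show "walk_in E S i j 1" by (rule w)
    fix y assume h: "walk_in E S i j y" show "1 \<le> y"
    proof (rule ccontr)
      assume "\<not> 1 \<le> y" then have "y = 0" by simp
      with h have "walk_in E S i j 0" by simp
      then show False using assms(4) walk0[of E S i j] by simp
    qed
  qed
  then show ?thesis using w unfolding dpow_def by auto
qed

lemma dpow2: assumes "{i,k} \<in> E" "{k,j} \<in> E" "i \<in> S" "j \<in> S" "k \<in> S" "i \<noteq> j" "{i,j} \<notin> E"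
  shows "dpow d E S i j = d^2"
proof -
  have w: "walk_in E S i j 2" using assms walk2[of i k E j S] by simp
  have "(LEAST n. walk_in E S i j n) = 2"
  proof (rule Least_equality)
    show "walk_in E S i j 2" by (rule w)
    fix y assume h: "walk_in E S i j y" show "2 \<le> y"
    proof (rule ccontr)
      assume "\<not> 2 \<le> y" then have "y = 0 \<or> y = Suc 0" by auto
      with h have "walk_in E S i j 0 \<or> walk_in E S i j (Suc 0)" by auto
      then show False using assms walk0[of E S i j] walk1[of E S i j] by auto
    qed
  qed
  then show ?thesis using w unfolding dpow_def by auto
qed

lemma sum_Pow1: "sum f (Pow {x}) = f {} + f {x}"
  by (simp add: Pow_insert add.commute)

lemma sum_Pow2: assumes "x \<noteq> y" shows "sum f (Pow {x,y}) = f {} + f {x} + f {y} + f {x,y}"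
proof -
  have "Pow {x,y} = {{}, {x}, {y}, {x,y}}" by (auto simp: subset_insert_iff) 
  then show ?thesis using assms by (simp add: doubleton_eq_iff add.assoc)
qed

lemma base_in: "h \<in> H \<Longrightarrow> x \<in> h \<Longrightarrow> y \<in> h \<Longrightarrow> h \<subseteq> C \<Longrightarrow>
   (x,y) \<in> {(x, y). \<exists>h\<in>H. h \<subseteq> C \<and> x \<in> h \<and> y \<in> h}\<^sup>+"
  by (rule r_into_trancl) auto

lemma in_conf_rel: "p \<in> {(x, y). \<exists>h\<in>H. h \<subseteq> C \<and> x \<in> h \<and> y \<in> h}\<^sup>+ \<Longrightarrow> p \<in> conf_rel H C"
  unfolding conf_rel_def by auto

lemma rg2: assumes "x \<noteq> y" "C \<subseteq> {x,y}" "vG d E {x,y} = 2*d"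
  shows "rgame d E {{x,y}} C = (if x \<in> C \<and> y \<in> C then 2*d else 0)"
proof (cases "x \<in> C \<and> y \<in> C")
  case True
  then have e: "C = {x,y}" using assms by auto
  have "\<forall>u\<in>{x,y}. \<forall>v\<in>{x,y}. (u,v) \<in> conf_rel {{x,y}} {x,y}"
  proof (intro ballI)
    fix u v assume "u\<in>{x,y}" "v\<in>{x,y}"
    then show "(u,v) \<in> conf_rel {{x,y}} {x,y}"
      by (intro in_conf_rel base_in[where h="{x,y}"]) simp_all
  qed
  then show ?thesis using rgame_conn[of "{x,y}" "{{x,y}}" d E] assms True unfolding e by simp
next
  case False
  then have "\<forall>h\<in>{{x,y}}. \<not> h \<subseteq> C" by auto
  then have "rgame d E {{x,y}} C = 0" by (intro rgame_discrete conf_rel_none)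
  then show ?thesis using False by (simp only: if_not_P[OF False] if_False)
qed

lemma rg0: "rgame d E {} C = 0"
  by (intro rgame_discrete conf_rel_none) simp

lemma shap2: assumes "x \<noteq> y"
  shows "shapley x {x,y} u = (1/2)*(u {x} - u {}) + (1/2)*(u {x,y} - u {y})"
proof -
  have "{x,y} - {x} = {y}" using assms by auto
  then show ?thesis using assms unfolding shapley_def by (simp add: sum_Pow1)
qed

lemma shap2': assumes "x \<noteq> y"
  shows "shapley y {x,y} u = (1/2)*(u {y} - u {}) + (1/2)*(u {x,y} - u {x})"
proof -
  have "{x,y} - {y} = {x}" using assms by auto
  then show ?thesis using assms unfolding shapley_def by (simp add: sum_Pow1 insert_commute)
qed

lemma shap3: assumes "x \<noteq> y" "x \<noteq> z" "y \<noteq> z"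
  shows "shapley x {x,y,z} u = (1/3)*(u {x} - u {}) + (1/6)*(u {x,y} - u {y})
     + (1/6)*(u {x,z} - u {z}) + (1/3)*(u {x,y,z} - u {y,z})"
proof -
  have "{x,y,z} - {x} = {y,z}" using assms by auto
  then show ?thesis using assms unfolding shapley_def
    by (simp add: sum_Pow2 insert_commute eval_nat_numeral) (simp add: field_simps)
qed

context
  fixes a b c :: 'a and d :: real
  assumes dist: "distinct [a, b, c]"
begin

lemma ne: "a \<noteq> b" "a \<noteq> c" "b \<noteq> c" "b \<noteq> a" "c \<noteq> a" "c \<noteq> b" using dist by auto

abbreviation "EE \<equiv> {{a, b}, {b, c}}"

lemma vG_ab: "vG d EE {a,b} = 2*d"
proof -
  have "dpow d EE {a,b} a b = d" "dpow d EE {a,b} b a = d"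
    using dist by (auto intro!: dpow1 simp: doubleton_eq_iff)
  then show ?thesis by (simp add: vG_def insert_Diff_if ne)
qed

lemma vG_bc: "vG d EE {b,c} = 2*d"
proof -
  have "dpow d EE {b,c} c b = d" "dpow d EE {b,c} b c = d"
    using dist by (auto intro!: dpow1 simp: doubleton_eq_iff)
  then show ?thesis by (simp add: vG_def insert_Diff_if ne)
qed

lemma vG_abc: "vG d EE {a,b,c} = 4*d + 2*d^2"
proof -
  have "dpow d EE {a,b,c} a b = d" "dpow d EE {a,b,c} b a = d"
    "dpow d EE {a,b,c} c b = d" "dpow d EE {a,b,c} b c = d"
    using dist by (auto intro!: dpow1 simp: doubleton_eq_iff)
  moreover have "dpow d EE {a,b,c} a c = d^2"
    using dist by (intro dpow2[where k=b]) (auto simp: doubleton_eq_iff)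
  moreover have "dpow d EE {a,b,c} c a = d^2"
    using dist by (intro dpow2[where k=b]) (auto simp: doubleton_eq_iff)
  ultimately show ?thesis by (simp add: vG_def insert_Diff_if ne)
qed

lemma rg: assumes "C \<subseteq> {a,b,c}"
  shows "rgame d EE EE C = (if a \<in> C \<and> b \<in> C \<and> c \<in> C then 4*d + 2*d^2
     else if (a \<in> C \<and> b \<in> C) \<or> (b \<in> C \<and> c \<in> C) then 2*d else 0)"
proof -
  have none: "rgame d EE EE C = 0" if "\<forall>h\<in>EE. \<not> h \<subseteq> C" for C
    using that by (intro rgame_discrete conf_rel_none)
  have ab: "rgame d EE EE {a,b} = 2*d"
  proof -
    have "\<forall>x\<in>{a,b}. \<forall>y\<in>{a,b}. (x,y) \<in> conf_rel EE {a,b}"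
    proof (intro ballI)
      fix x y assume "x\<in>{a,b}" "y\<in>{a,b}"
      then show "(x,y) \<in> conf_rel EE {a,b}"
        by (intro in_conf_rel base_in[where h="{a,b}"]) simp_all
    qed
    then show ?thesis using rgame_conn[of "{a,b}" EE d EE] vG_ab by simp
  qed
  have bc: "rgame d EE EE {b,c} = 2*d"
  proof -
    have "\<forall>x\<in>{b,c}. \<forall>y\<in>{b,c}. (x,y) \<in> conf_rel EE {b,c}"
    proof (intro ballI)
      fix x y assume "x\<in>{b,c}" "y\<in>{b,c}"
      then show "(x,y) \<in> conf_rel EE {b,c}"
        by (intro in_conf_rel base_in[where h="{b,c}"]) simp_all
    qed
    then show ?thesis using rgame_conn[of "{b,c}" EE d EE] vG_bc by simp
  qed
  have abc: "rgame d EE EE {a,b,c} = 4*d + 2*d^2"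
  proof -
    let ?r = "{(x, y). \<exists>h\<in>EE. h \<subseteq> {a,b,c} \<and> x \<in> h \<and> y \<in> h}"
    have 1: "(x,y) \<in> ?r\<^sup>+" if "x\<in>{a,b}" "y\<in>{a,b}" for x y
      using that by (intro base_in[where h="{a,b}"]) auto
    have 2: "(x,y) \<in> ?r\<^sup>+" if "x\<in>{b,c}" "y\<in>{b,c}" for x y
      using that by (intro base_in[where h="{b,c}"]) auto
    have 3: "(a,c) \<in> ?r\<^sup>+" "(c,a) \<in> ?r\<^sup>+"
      using trancl_trans[OF 1[of a b] 2[of b c]] trancl_trans[OF 2[of c b] 1[of b a]] by simp_all
    have "\<forall>x\<in>{a,b,c}. \<forall>y\<in>{a,b,c}. (x,y) \<in> conf_rel EE {a,b,c}"
    proof (intro ballI)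
      fix x y assume "x\<in>{a,b,c}" "y\<in>{a,b,c}"
      then have "(x,y) \<in> ?r\<^sup>+" using 1 2 3 by blast
      then show "(x,y) \<in> conf_rel EE {a,b,c}" by (rule in_conf_rel)
    qed
    then show ?thesis using rgame_conn[of "{a,b,c}" EE d EE] vG_abc by simp
  qed
  show ?thesis
  proof (cases "a \<in> C"; cases "b \<in> C"; cases "c \<in> C")
    assume "a \<in> C" "b \<in> C" "c \<in> C"
    then have e: "C = {a,b,c}" using assms by auto
    show ?thesis unfolding e by (simp add: abc ne)
  next
    assume "a \<in> C" "b \<in> C" "\<not> c \<in> C"
    then have e: "C = {a,b}" using assms by auto
    show ?thesis unfolding e by (simp add: ab ne)
  next
    assume "a \<in> C" "\<not> b \<in> C" "c \<in> C"
    then have e: "C = {a,c}" using assms by auto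
    show ?thesis unfolding e by (simp add: ne) (rule none, simp add: ne)
  next
    assume "a \<in> C" "\<not> b \<in> C" "\<not> c \<in> C"
    then have e: "C = {a}" using assms by auto
    show ?thesis unfolding e by (simp add: ne) (rule none, simp add: ne)
  next
    assume "\<not> a \<in> C" "b \<in> C" "c \<in> C"
    then have e: "C = {b,c}" using assms by auto
    show ?thesis unfolding e by (simp add: bc ne)
  next
    assume "\<not> a \<in> C" "b \<in> C" "\<not> c \<in> C"
    then have e: "C = {b}" using assms by auto
    show ?thesis unfolding e by (simp add: ne) (rule none, simp add: ne)
  next
    assume "\<not> a \<in> C" "\<not> b \<in> C" "c \<in> C"
    then have e: "C = {c}" using assms by auto
    show ?thesis unfolding e by (simp add: ne) (rule none, simp add: ne)
  next
    assume "\<not> a \<in> C" "\<not> b \<in> C" "\<not> c \<in> C"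
    then have e: "C = {}" using assms by auto
    show ?thesis unfolding e by (simp add: ne) (rule none, simp add: ne)
  qed
qed


lemma restr_a: "restr EE {b,c} = {{b,c}}" using ne unfolding restr_def by auto
lemma restr_b: "restr EE {a,c} = {}" using ne unfolding restr_def by auto
lemma restr_c: "restr EE {a,b} = {{a,b}}" using ne unfolding restr_def by auto
lemma Vm: "{a,b,c} - {a} = {b,c}" "{a,b,c} - {b} = {a,c}" "{a,b,c} - {c} = {a,b}" using ne by auto

lemma shV: "shapley a {a,b,c} (rgame d EE EE) = d + 2/3*d^2"
   "shapley b {a,b,c} (rgame d EE EE) = 2*d + 2/3*d^2"
   "shapley c {a,b,c} (rgame d EE EE) = d + 2/3*d^2"
proof -
  have e1: "{a,b,c} = {b,a,c}" "{a,b,c} = {c,a,b}" by auto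
  show "shapley a {a,b,c} (rgame d EE EE) = d + 2/3*d^2"
    by (simp add: shap3 ne rg power2_eq_square algebra_simps)
  show "shapley b {a,b,c} (rgame d EE EE) = 2*d + 2/3*d^2"
    by (subst e1(1), simp add: shap3 ne rg power2_eq_square algebra_simps)
  show "shapley c {a,b,c} (rgame d EE EE) = d + 2/3*d^2"
    by (subst e1(2), simp add: shap3 ne rg power2_eq_square algebra_simps)
qed

lemma bp: "bpow d EE EE {a,b,c} a b = d + 2/3*d^2"
  "bpow d EE EE {a,b,c} a c = 2/3*d^2"
  "bpow d EE EE {a,b,c} b a = d + 2/3*d^2"
  "bpow d EE EE {a,b,c} b c = d + 2/3*d^2"
  "bpow d EE EE {a,b,c} c a = 2/3*d^2"
  "bpow d EE EE {a,b,c} c b = d + 2/3*d^2"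
proof -
  have e: "{b,c} = {c,b}" "{a,b} = {b,a}" by auto
  have s1: "shapley b {b,c} (rgame d EE {{b,c}}) = d"
    by (simp add: shap2 ne rg2 vG_bc)
  have s2: "shapley c {b,c} (rgame d EE {{b,c}}) = d"
    by (simp add: shap2' ne rg2 vG_bc)
  have s3: "shapley a {a,b} (rgame d EE {{a,b}}) = d"
    by (simp add: shap2 ne rg2 vG_ab)
  have s4: "shapley b {a,b} (rgame d EE {{a,b}}) = d"
    by (simp add: shap2' ne rg2 vG_ab)
  have s0: "shapley x X (rgame d EE {}) = 0" for x X
    by (simp add: shapley_def rg0)
  show "bpow d EE EE {a,b,c} a b = d + 2/3*d^2"
    "bpow d EE EE {a,b,c} a c = 2/3*d^2"
    "bpow d EE EE {a,b,c} b a = d + 2/3*d^2"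
    "bpow d EE EE {a,b,c} b c = d + 2/3*d^2"
    "bpow d EE EE {a,b,c} c a = 2/3*d^2"
    "bpow d EE EE {a,b,c} c b = d + 2/3*d^2"
    unfolding bpow_def Vm restr_a restr_b restr_c
    by (simp_all add: shV s0 s1 s2 s3 s4)
qed

end


lemma cs_beta_pos: "1 \<le> N \<Longrightarrow> cs_beta N > 0"
  unfolding cs_beta_def by simp

lemma cs_beta_mono: assumes "1 \<le> m" "m \<le> n" shows "cs_beta n \<le> cs_beta m"
proof -
  have "2 * real m * (real m + 1) \<le> 2 * real n * (real n + 1)"
    using assms by (intro mult_mono) auto
  moreover have A: "0 < 2 * real m * (real m + 1)" using assms by simp
  moreover have B: "0 < 2 * real n * (real n + 1)" using assms by simp
  have "0 < (2 * real n * (real n + 1)) * (2 * real m * (real m + 1))"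
    using mult_pos_pos[OF B A] .
  then show ?thesis unfolding cs_beta_def
    by (rule divide_left_mono[OF \<open>2 * real m * (real m + 1) \<le> 2 * real n * (real n + 1)\<close> zero_le_one])
qed

definition csP :: "real \<Rightarrow> nat \<Rightarrow> bool" where
  "csP b N \<longleftrightarrow> N \<ge> 1 \<and> cs_beta N \<le> b \<and> (N = 1 \<or> b < cs_beta (N - 1))"

lemma cs_ex: assumes "b > 0" shows "\<exists>N. csP b N"
proof -
  define n where "n = nat \<lceil>1/b\<rceil> + 1"
  have n1: "1 \<le> n" unfolding n_def by simp
  have "1/b < real n" unfolding n_def by linarith
  then have "1 / real n < b" using assms n1
    by (metis divide_less_eq mult.commute of_nat_0_less_iff less_le_trans zero_less_one
        divide_less_eq_1 less_numeral_extra(1))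
  moreover have "cs_beta n \<le> 1 / real n"
  proof -
    have le: "real n \<le> 2 * real n * (real n + 1)" using n1 by (simp add: algebra_simps)
    have "0 < (2 * real n * (real n + 1)) * real n" using n1 by simp
    then show ?thesis unfolding cs_beta_def by (rule divide_left_mono[OF le zero_le_one])
  qed
  ultimately have ex: "1 \<le> n \<and> cs_beta n \<le> b" using n1 by simp
  define N where "N = (LEAST n. 1 \<le> n \<and> cs_beta n \<le> b)"
  have N: "1 \<le> N \<and> cs_beta N \<le> b" unfolding N_def by (rule LeastI[of _ n], rule ex)
  have "N = 1 \<or> b < cs_beta (N - 1)"
  proof (rule ccontr)
    assume h: "\<not> (N = 1 \<or> b < cs_beta (N - 1))"
    then have "1 \<le> N - 1 \<and> cs_beta (N - 1) \<le> b" using N by auto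
    then have "N \<le> N - 1" unfolding N_def by (rule Least_le)
    then show False using N h by arith
  qed
  then show ?thesis using N unfolding csP_def by blast
qed

lemma cs_le: assumes "csP b N" "csP b' M" "b \<le> b'" shows "M \<le> N"
proof (rule ccontr)
  assume "\<not> M \<le> N"
  then have "N \<le> M - 1" "M \<noteq> 1" using assms(1) unfolding csP_def by auto
  then have "cs_beta (M - 1) \<le> cs_beta N" using assms(1) unfolding csP_def by (intro cs_beta_mono) auto
  then show False using assms \<open>M \<noteq> 1\<close> unfolding csP_def by auto
qed

lemma cs_N_P: assumes "b > 0" shows "csP b (cs_N b)"
proof -
  have "\<exists>!N. csP b N" using cs_ex[OF assms] cs_le by (metis order_refl le_antisym)
  then show ?thesis unfolding cs_N_def csP_def[symmetric] by (rule theI')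
qed

lemma cs_N_mono: "0 < b \<Longrightarrow> b \<le> b' \<Longrightarrow> cs_N b' \<le> cs_N b"
  using cs_le cs_N_P by (meson less_le_trans)

theorem proposition2:
  fixes \<delta> :: real and a b c S R W :: 'a and V :: "'a set" and E H :: "'a set set"
  assumes "0 < \<delta>" "\<delta> < 1"
    and "distinct [a, b, c]"
    and "V = {a, b, c}"
    and "E = {{a, b}, {b, c}}"
    and "H = {{i, j} | i j. {i, j} \<in> E}"
    and "distinct [S, R, W]" "{S, R, W} = V"
  shows "b_eff \<delta> E H V S R {W} = (bpow \<delta> E H V S R + bpow \<delta> E H V S W + bpow \<delta> E H V W R) / 2
    \<and> (bpow \<delta> E H V S R + bpow \<delta> E H V S W + bpow \<delta> E H V W R) / 2 = \<delta> + \<delta>\<^sup>2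
    \<and> cs_N (\<delta> + \<delta>\<^sup>2) \<le> cs_N \<delta>
    \<and> cs_N (\<delta> + \<delta>\<^sup>2) \<le> cs_N (\<delta> + 2 / 3 * \<delta>\<^sup>2)"
proof (intro conjI)
  show "b_eff \<delta> E H V S R {W} = (bpow \<delta> E H V S R + bpow \<delta> E H V S W + bpow \<delta> E H V W R) / 2"
    unfolding b_eff_def by (simp add: add.assoc)
  have HE: "H = E" unfolding assms(6) using assms(5) by blast
  have mem: "S \<in> {a,b,c}" "R \<in> {a,b,c}" "W \<in> {a,b,c}" using assms(4,8) by auto
  show "(bpow \<delta> E H V S R + bpow \<delta> E H V S W + bpow \<delta> E H V W R) / 2 = \<delta> + \<delta>\<^sup>2"
    using mem assms(7) unfolding HE assms(4,5)
    by (auto simp: bp[OF assms(3)] ne[OF assms(3)] algebra_simps power2_eq_square)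
  have p: "0 < \<delta>^2" using assms(1) by simp
  show "cs_N (\<delta> + \<delta>\<^sup>2) \<le> cs_N \<delta>"
    using assms(1) p by (intro cs_N_mono) auto
  have q: "0 < 2 / 3 * \<delta>\<^sup>2" using p by simp
  show "cs_N (\<delta> + \<delta>\<^sup>2) \<le> cs_N (\<delta> + 2 / 3 * \<delta>\<^sup>2)"
    using assms(1) p q by (intro cs_N_mono) linarith+
qed

end
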